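(* There is an absolute constant $c>0$ such that for all $k\ge 2$, $$2^{ck}\le R_3(\mathcal{B}(K_4),k)\le R(K_4^*,k)+1,$$ and moreover $R(K_4^*,k)\le e(1+o(1))(k-1)k!$ as $k\to\infty$.
   Context: For a graph $G$, a hypergraph $H$ is a Berge-$G$ hypergraph if there are an injective map $\phi:V(G)\to V(H)$ and pairwise distinct hyperedges $e_{xy}\in E(H)$, one for each $xy\in E(G)$, with $\phi(x),\phi(y)\in e_{xy}$. $\mathcal{B}(G)$ denotes the family of all Berge-$G$ hypergraphs. For a family $\mathcal{H}$ of $3$-uniform hypergraphs, $R_3(\mathcal{H},k)$ is the smallest $n$ such that every $k$-coloring of the hyperedges of the complete $3$-uniform hypergraph $K_n^3$ contains a monochromatic subhypergraph belonging to $\mathcal{H}$. For a family $\mathcal{G}$ of graphs, $R(\mathcal{G},k)$ is the smallest $n$ such that every $k$-coloring of the edges of $K_n$ contains a monochromatic subgraph isomorphic to some member of $\mathcal{G}$. $K_4^*$ is the family of graphs consisting of: $K_4$; the graph obtained from $K_4$ minus an edge by attaching a pendant edge at one of its two vertices of degree $2$; and the triangle with a pendant edge attached at each of its three vertices. (Equivalently, for a vertex $v$ of $K_4$ with neighbors $q_1,q_2,q_3$, $K_4^*$ is the family of graphs obtained from the triangle $K_4-v$ by adding, for each $i$, an edge $q_ir_i$ not in the triangle, with $r_i$ a vertex of the triangle or a new vertex, new vertices possibly shared, the three added edges pairwise distinct.) *)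

theory Defs
  imports Complex_Main
begin

text \<open>A (simple) graph is a pair (V, E) with E a set of 2-element subsets of V.
  A hypergraph is a pair (V, E) with E a set of subsets of V.\<close>

type_synonym 'a graph = "'a set \<times> 'a set set"
type_synonym 'a hgraph = "'a set \<times> 'a set set"

definition is_berge :: "'b hgraph \<Rightarrow> 'a graph \<Rightarrow> bool" where
  "is_berge H G \<longleftrightarrow> (\<exists>\<phi> e.
      inj_on \<phi> (fst G) \<and> \<phi> ` fst G \<subseteq> fst H \<and>
      inj_on e (snd G) \<and> e ` snd G \<subseteq> snd H \<and>
      (\<forall>xy \<in> snd G. \<phi> ` xy \<subseteq> e xy))"

definition subhypergraph :: "'b hgraph \<Rightarrow> 'b hgraph \<Rightarrow> bool" where
  "subhypergraph H' H \<longleftrightarrow> fst H' \<subseteq> fst H \<and> snd H' \<subseteq> snd H \<and> (\<forall>e\<in>snd H'. e \<subseteq> fst H')"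

definition contains_copy :: "'b graph \<Rightarrow> 'a graph \<Rightarrow> bool" where
  "contains_copy G F \<longleftrightarrow> (\<exists>\<phi>. inj_on \<phi> (fst F) \<and> \<phi> ` fst F \<subseteq> fst G \<and>
      (\<forall>xy \<in> snd F. \<phi> ` xy \<in> snd G))"

definition R3_berge :: "'a graph \<Rightarrow> nat \<Rightarrow> nat" where
  "R3_berge G k = Inf {n. \<forall>f :: nat set \<Rightarrow> nat.
      (\<forall>e. e \<subseteq> {..<n} \<and> card e = 3 \<longrightarrow> f e < k) \<longrightarrow>
      (\<exists>i<k. \<exists>H'. subhypergraph H' ({..<n}, {e. e \<subseteq> {..<n} \<and> card e = 3 \<and> f e = i})
                  \<and> is_berge H' G)}"

definition R_graph :: "'a graph set \<Rightarrow> nat \<Rightarrow> nat" where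
  "R_graph \<G> k = Inf {n. \<forall>f :: nat set \<Rightarrow> nat.
      (\<forall>e. e \<subseteq> {..<n} \<and> card e = 2 \<longrightarrow> f e < k) \<longrightarrow>
      (\<exists>i<k. \<exists>F\<in>\<G>. contains_copy ({..<n}, {e. e \<subseteq> {..<n} \<and> card e = 2 \<and> f e = i}) F)}"

definition K4 :: "nat graph" where
  "K4 = ({0,1,2,3}, {{0,1},{0,2},{0,3},{1,2},{1,3},{2,3}})"

text \<open>K_4 minus the edge 23, with pendant edge 24 at the degree-2 vertex 2.\<close>
definition K4_minus_pendant :: "nat graph" where
  "K4_minus_pendant = ({0,1,2,3,4}, {{0,1},{0,2},{0,3},{1,2},{1,3},{2,4}})"

text \<open>Triangle 012 with pendant edges 03, 14, 25.\<close>
definition triangle_pendants :: "nat graph" where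
  "triangle_pendants = ({0,1,2,3,4,5}, {{0,1},{0,2},{1,2},{0,3},{1,4},{2,5}})"

definition K4_star :: "nat graph set" where
  "K4_star = {K4, K4_minus_pendant, triangle_pendants}"

end

theory Submission imports Defs "HOL-Library.FuncSet" begin


definition degc :: "nat set \<Rightarrow> (nat set \<Rightarrow> nat) \<Rightarrow> nat \<Rightarrow> nat \<Rightarrow> nat" where
  "degc V f c x = card {y\<in>V. y \<noteq> x \<and> f {x,y} = c}"

definition goodc :: "nat set \<Rightarrow> (nat set \<Rightarrow> nat) \<Rightarrow> bool" where
  "goodc V f \<longleftrightarrow> (\<forall>x\<in>V. \<forall>y\<in>V. \<forall>z\<in>V. x \<noteq> y \<longrightarrow> y \<noteq> z \<longrightarrow> x \<noteq> z \<longrightarrow>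
     f {x,y} = f {y,z} \<longrightarrow> f {x,z} = f {x,y} \<longrightarrow>
     degc V f (f {x,y}) x \<le> 2 \<or> degc V f (f {x,y}) y \<le> 2 \<or> degc V f (f {x,y}) z \<le> 2)"

lemma degc_mono: "U \<subseteq> V \<Longrightarrow> finite V \<Longrightarrow> degc U f c x \<le> degc V f c x"
  unfolding degc_def by (rule card_mono) auto

lemma goodc_sub: "goodc V f \<Longrightarrow> U \<subseteq> V \<Longrightarrow> finite V \<Longrightarrow> goodc U f"
  unfolding goodc_def
  by (smt (verit, ccfv_threshold) degc_mono le_trans subsetD)

definition Bfun :: "nat \<Rightarrow> nat" where
  "Bfun k = (if k = 0 then 1 else 10 * fact k - 5)"

lemma card_filter_sum: "finite A \<Longrightarrow> card {x\<in>A. P x} = (\<Sum>x\<in>A. if P x then 1 else 0)"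
  by (simp add: sum.inter_filter[symmetric])

lemma sumD_bound:
  assumes "finite V"
  shows "(\<Sum>v\<in>V. card {x\<in>V. x \<noteq> v \<and> f {v,x} = c \<and> degc V f c x \<le> 2}) \<le> 2 * card V"
proof -
  have "(\<Sum>v\<in>V. card {x\<in>V. x \<noteq> v \<and> f {v,x} = c \<and> degc V f c x \<le> 2})
     = (\<Sum>v\<in>V. \<Sum>x\<in>V. if x \<noteq> v \<and> f {v,x} = c \<and> degc V f c x \<le> 2 then 1 else 0)"
    using assms by (simp add: card_filter_sum)
  also have "\<dots> = (\<Sum>x\<in>V. \<Sum>v\<in>V. if x \<noteq> v \<and> f {v,x} = c \<and> degc V f c x \<le> 2 then 1 else 0)"
    by (rule sum.swap)
  also have "\<dots> \<le> (\<Sum>x\<in>V. 2)"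
  proof (rule sum_mono)
    fix x assume "x \<in> V"
    show "(\<Sum>v\<in>V. if x \<noteq> v \<and> f {v,x} = c \<and> degc V f c x \<le> 2 then 1 else 0) \<le> (2::nat)"
    proof (cases "degc V f c x \<le> 2")
      case True
      have "(\<Sum>v\<in>V. if x \<noteq> v \<and> f {v,x} = c \<and> degc V f c x \<le> 2 then 1 else 0)
          = card {v\<in>V. v \<noteq> x \<and> f {x,v} = c}"
        using assms True by (simp add: card_filter_sum insert_commute eq_commute)
      also have "\<dots> = degc V f c x" by (simp add: degc_def)
      finally show ?thesis using True by simp
    next
      case False thus ?thesis by simp
    qed
  qed
  finally show ?thesis by simp
qed


lemma arithB: fixes F k :: nat assumes "F \<ge> 1" "k \<ge> 1"
  shows "Suc (Suc k * (10*F - 5) + 2*Suc k) \<le> 10 * (Suc k * F) - 5"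
proof -
  obtain G where G: "F = Suc G" using assms(1) by (cases F) auto
  obtain j where j: "k = Suc j" using assms(2) by (cases k) auto
  show ?thesis unfolding G j by (simp add: algebra_simps)
qed

lemma good_bound:
  "finite K \<Longrightarrow> finite V \<Longrightarrow> (\<forall>x\<in>V. \<forall>y\<in>V. x \<noteq> y \<longrightarrow> f {x,y} \<in> K) \<Longrightarrow> goodc V f
   \<Longrightarrow> card V \<le> Bfun (card K)"
proof (induction "card K" arbitrary: K V)
  case 0
  then have "K = {}" by simp
  with 0 have "\<forall>x\<in>V. \<forall>y\<in>V. x = y" by auto
  then have "card V \<le> 1" using card_le_Suc0_iff_eq[OF 0(3)] by auto
  then show ?case using 0 by (simp add: Bfun_def)
next
  case (Suc k K V)
  note fin = Suc.prems(1,2) and col = Suc.prems(3) and good = Suc.prems(4)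
  show ?case
  proof (cases "V = {}")
    case True thus ?thesis by (simp add: Bfun_def)
  next
    case Vne: False
    define N where "N c v = {x\<in>V. x \<noteq> v \<and> f {v,x} = c}" for c v
    define D where "D c v = {x\<in>V. x \<noteq> v \<and> f {v,x} = c \<and> degc V f c x \<le> 2}" for c v
    define H where "H c v = {x\<in>V. x \<noteq> v \<and> f {v,x} = c \<and> \<not> degc V f c x \<le> 2}" for c v
    have sumD: "(\<Sum>v\<in>V. \<Sum>c\<in>K. card (D c v)) \<le> card K * (2 * card V)"
    proof -
      have "(\<Sum>v\<in>V. \<Sum>c\<in>K. card (D c v)) = (\<Sum>c\<in>K. \<Sum>v\<in>V. card (D c v))"
        by (rule sum.swap)
      also have "\<dots> \<le> (\<Sum>c\<in>K. 2 * card V)"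
        by (rule sum_mono) (unfold D_def, rule sumD_bound[OF fin(2)])
      finally show ?thesis by simp
    qed
    obtain v where v: "v \<in> V" "(\<Sum>c\<in>K. card (D c v)) \<le> 2 * card K"
    proof (rule ccontr)
      assume "\<not> thesis"
      have "\<forall>v\<in>V. 2 * card K < (\<Sum>c\<in>K. card (D c v))"
      proof
        fix w assume w: "w \<in> V"
        show "2 * card K < (\<Sum>c\<in>K. card (D c w))"
        proof (rule ccontr)
          assume "\<not> 2 * card K < (\<Sum>c\<in>K. card (D c w))"
          then have "(\<Sum>c\<in>K. card (D c w)) \<le> 2 * card K" by simp
          then show False using that[OF w] \<open>\<not> thesis\<close> by blast
        qed
      qed
      then have "(\<Sum>v\<in>V. 2 * card K) < (\<Sum>v\<in>V. \<Sum>c\<in>K. card (D c v))"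
        by (intro sum_strict_mono[OF fin(2) Vne]) blast
      with sumD show False by (simp add: mult.commute mult.left_commute)
    qed
    have Nbound: "card (N c v) \<le> max 2 (Bfun k) + card (D c v)" if cK: "c \<in> K" for c
    proof (cases "degc V f c v \<le> 2")
      case True
      have "card (N c v) = degc V f c v" by (simp add: N_def degc_def)
      with True show ?thesis by simp
    next
      case False
      have NHD: "N c v = H c v \<union> D c v" by (auto simp: N_def H_def D_def)
      have finH: "finite (H c v)" using fin(2) by (simp add: H_def)
      have colH: "\<forall>x\<in>H c v. \<forall>y\<in>H c v. x \<noteq> y \<longrightarrow> f {x,y} \<in> K - {c}"
      proof (intro ballI impI)
        fix x y assume x: "x \<in> H c v" and y: "y \<in> H c v" and xy: "x \<noteq> y"
        have "f {x,y} \<in> K" using col x y xy by (auto simp: H_def)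
        moreover have "f {x,y} \<noteq> c"
        proof
          assume fc: "f {x,y} = c"
          have "v \<noteq> x" "v \<noteq> y" "v \<in> V" "x \<in> V" "y \<in> V" "f {v,x} = c" "f {v,y} = c"
            "\<not> degc V f c x \<le> 2" "\<not> degc V f c y \<le> 2"
            using x y v by (auto simp: H_def)
          note h = this
          have gg: "f {v,x} = f {x,y} \<longrightarrow> f {v,y} = f {v,x} \<longrightarrow>
             degc V f (f {v,x}) v \<le> 2 \<or> degc V f (f {v,x}) x \<le> 2 \<or> degc V f (f {v,x}) y \<le> 2"
            using good[unfolded goodc_def, rule_format, OF h(3) h(4) h(5) h(1) xy h(2)] by blast
          then show False using h fc False by simp
        qed
        ultimately show "f {x,y} \<in> K - {c}" by simp
      qed
      have goodH: "goodc (H c v) f"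
        by (rule goodc_sub[OF good _ fin(2)]) (auto simp: H_def)
      have "card (K - {c}) = k" using Suc.hyps(2) cK fin(1) by simp
      then have "card (H c v) \<le> Bfun k"
        using Suc.hyps(1)[of "K - {c}" "H c v"] fin(1) finH colH goodH by simp
      then have "card (N c v) \<le> Bfun k + card (D c v)"
        using NHD card_Un_le[of "H c v" "D c v"] by simp
      then show ?thesis by simp
    qed
    have "V \<subseteq> insert v (\<Union>c\<in>K. N c v)"
    proof
      fix x assume "x \<in> V"
      show "x \<in> insert v (\<Union>c\<in>K. N c v)"
      proof (cases "x = v")
        case False
        then have "f {v,x} \<in> K" using col v(1) \<open>x \<in> V\<close> by auto
        then show ?thesis using False \<open>x \<in> V\<close> by (auto simp: N_def)
      qed simp
    qed
    then have c1: "card V \<le> card (insert v (\<Union>c\<in>K. N c v))"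
      by (rule card_mono[rotated]) (use fin in \<open>auto simp: N_def\<close>)
    have c2: "card (insert v (\<Union>c\<in>K. N c v)) \<le> Suc (card (\<Union>c\<in>K. N c v))"
      by (rule card_insert_le_m1) auto
    have "card (\<Union>c\<in>K. N c v) \<le> (\<Sum>c\<in>K. card (N c v))"
      by (rule card_UN_le[OF fin(1)])
    also have "\<dots> \<le> (\<Sum>c\<in>K. max 2 (Bfun k) + card (D c v))"
      by (rule sum_mono) (rule Nbound)
    also have "\<dots> = card K * max 2 (Bfun k) + (\<Sum>c\<in>K. card (D c v))"
      by (simp add: sum.distrib)
    finally have c3: "card (\<Union>c\<in>K. N c v) \<le> card K * max 2 (Bfun k) + (\<Sum>c\<in>K. card (D c v))" .
    have cV0: "card V \<le> Suc (card K * max 2 (Bfun k) + (\<Sum>c\<in>K. card (D c v)))"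
      using c1 c2 c3 by linarith
    have cV: "card V \<le> Suc (Suc k * max 2 (Bfun k) + 2 * Suc k)"
      using cV0 v(2) Suc.hyps(2)[symmetric] by simp
    show ?thesis
    proof (cases "k = 0")
      case True
      then have "card K = 1" using Suc.hyps(2) by simp
      thus ?thesis using cV True by (simp add: Bfun_def)
    next
      case False
      have f1: "fact k \<ge> (1::nat)" by (simp add: fact_ge_1)
      have "Bfun k = 10 * fact k - 5" using False by (simp add: Bfun_def)
      moreover have h10: "(10::nat) \<le> 10 * fact k" using f1 by simp
      moreover have "2 \<le> 10 * fact k - (5::nat)" using h10 by linarith
      ultimately have mx: "max 2 (Bfun k) = 10 * fact k - 5" by (simp add: max_def)
      have "Suc (Suc k * (10 * fact k - 5) + 2 * Suc k) \<le> 10 * fact (Suc k) - 5"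
        using arithB[OF f1, of k] False by simp
      then show ?thesis using cV mx Suc.hyps(2) by (simp add: Bfun_def)
    qed
  qed
qed


lemma copy_K4:
  assumes "distinct [a,b,c,d]" "{a,b,c,d} \<subseteq> V"
    "{a,b} \<in> E" "{a,c} \<in> E" "{a,d} \<in> E" "{b,c} \<in> E" "{b,d} \<in> E" "{c,d} \<in> E"
  shows "contains_copy (V, E) K4"
  unfolding contains_copy_def K4_def
  apply (rule exI[of _ "\<lambda>i. [a,b,c,d] ! i"])
  using assms by (auto simp: inj_on_def)

lemma copy_K4mp:
  assumes "distinct [a,b,c,d,e]" "{a,b,c,d,e} \<subseteq> V"
    "{a,b} \<in> E" "{a,c} \<in> E" "{a,d} \<in> E" "{b,c} \<in> E" "{b,d} \<in> E" "{c,e} \<in> E"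
  shows "contains_copy (V, E) K4_minus_pendant"
  unfolding contains_copy_def K4_minus_pendant_def
  apply (rule exI[of _ "\<lambda>i. [a,b,c,d,e] ! i"])
  using assms by (auto simp: inj_on_def)

lemma copy_tp:
  assumes "distinct [a,b,c,d,e,g]" "{a,b,c,d,e,g} \<subseteq> V"
    "{a,b} \<in> E" "{a,c} \<in> E" "{b,c} \<in> E" "{a,d} \<in> E" "{b,e} \<in> E" "{c,g} \<in> E"
  shows "contains_copy (V, E) triangle_pendants"
  unfolding contains_copy_def triangle_pendants_def
  apply (rule exI[of _ "\<lambda>i. [a,b,c,d,e,g] ! i"])
  using assms by (auto simp: inj_on_def)

lemma copy_from_triangle:
  assumes d: "distinct [q1,q2,q3]" and r: "r1 \<notin> {q1,q2,q3}" "r2 \<notin> {q1,q2,q3}" "r3 \<notin> {q1,q2,q3}"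
    and V: "{q1,q2,q3,r1,r2,r3} \<subseteq> V"
    and E: "{q1,q2} \<in> E" "{q1,q3} \<in> E" "{q2,q3} \<in> E" "{q1,r1} \<in> E" "{q2,r2} \<in> E" "{q3,r3} \<in> E"
  shows "\<exists>F\<in>K4_star. contains_copy (V, E) F"
proof -
  have sym: "{x,y} = {y,x}" for x y :: nat by auto
  consider "r1 = r2" "r2 = r3" | "r1 = r2" "r2 \<noteq> r3" | "r1 = r3" "r1 \<noteq> r2"
    | "r2 = r3" "r1 \<noteq> r2" | "r1 \<noteq> r2" "r1 \<noteq> r3" "r2 \<noteq> r3" by blast
  then show ?thesis
  proof cases
    case 1
    have "contains_copy (V, E) K4"
      by (rule copy_K4[of q1 q2 q3 r1]) (use assms 1 in auto)
    then show ?thesis by (auto simp: K4_star_def)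
  next
    case 2
    have "contains_copy (V, E) K4_minus_pendant"
      by (rule copy_K4mp[of q1 q2 q3 r1 r3]) (use assms 2 in auto)
    then show ?thesis by (auto simp: K4_star_def)
  next
    case 3
    have "contains_copy (V, E) K4_minus_pendant"
      by (rule copy_K4mp[of q1 q3 q2 r1 r2]) (use assms 3 in \<open>auto simp: insert_commute\<close>)
    then show ?thesis by (auto simp: K4_star_def)
  next
    case 4
    have "contains_copy (V, E) K4_minus_pendant"
      by (rule copy_K4mp[of q2 q3 q1 r2 r1]) (use assms 4 in \<open>auto simp: insert_commute\<close>)
    then show ?thesis by (auto simp: K4_star_def)
  next
    case 5
    have "contains_copy (V, E) triangle_pendants"
      by (rule copy_tp[of q1 q2 q3 r1 r2 r3]) (use assms 5 in auto)
    then show ?thesis by (auto simp: K4_star_def)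
  qed
qed


lemma getr:
  assumes "finite V" "\<not> degc V f c x \<le> 2"
  shows "\<exists>r\<in>V. r \<notin> {x,y,z} \<and> f {x,r} = c"
proof -
  let ?S = "{r\<in>V. r \<noteq> x \<and> f {x,r} = c}"
  have "card ?S \<ge> 3" using assms(2) by (simp add: degc_def)
  moreover have "card {y,z} \<le> 2" by (simp add: card_insert_le_m1)
  ultimately have "\<not> ?S \<subseteq> {y,z}" by (metis (no_types, lifting) card_mono finite.emptyI finite.insertI le_trans not_less_eq_eq numeral_3_eq_3 numeral_2_eq_2)
  then show ?thesis by blast
qed

lemma good_of_nocopy:
  assumes col: "\<forall>e. e \<subseteq> {..<n} \<and> card e = 2 \<longrightarrow> f e < k"
    and nc: "\<not> (\<exists>i<k. \<exists>F\<in>K4_star. contains_copy ({..<n}, {e. e \<subseteq> {..<n} \<and> card e = 2 \<and> f e = i}) F)"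
  shows "goodc {..<n} f"
  unfolding goodc_def
proof (intro ballI impI, rule ccontr)
  fix x y z assume x: "x \<in> {..<n}" and y: "y \<in> {..<n}" and z: "z \<in> {..<n}"
    and xy: "x \<noteq> y" and yz: "y \<noteq> z" and xz: "x \<noteq> z"
    and e1: "f {x,y} = f {y,z}" and e2: "f {x,z} = f {x,y}"
  assume nd: "\<not> (degc {..<n} f (f {x,y}) x \<le> 2 \<or> degc {..<n} f (f {x,y}) y \<le> 2 \<or> degc {..<n} f (f {x,y}) z \<le> 2)"
  define c where "c = f {x,y}"
  obtain r1 where r1: "r1 \<in> {..<n}" "r1 \<notin> {x,y,z}" "f {x,r1} = c"
    using getr[of "{..<n}" f c x y z] nd by (auto simp: c_def)
  obtain r2 where r2: "r2 \<in> {..<n}" "r2 \<notin> {y,x,z}" "f {y,r2} = c"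
    using getr[of "{..<n}" f c y x z] nd by (auto simp: c_def)
  obtain r3 where r3: "r3 \<in> {..<n}" "r3 \<notin> {z,x,y}" "f {z,r3} = c"
    using getr[of "{..<n}" f c z x y] nd by (auto simp: c_def)
  define E where "E = {e. e \<subseteq> {..<n} \<and> card e = 2 \<and> f e = c}"
  have inE: "{a,b} \<in> E" if "a \<in> {..<n}" "b \<in> {..<n}" "a \<noteq> b" "f {a,b} = c" for a b
    using that by (simp add: E_def)
  have "\<exists>F\<in>K4_star. contains_copy ({..<n}, E) F"
    apply (rule copy_from_triangle[of x y z r1 r2 r3])
    using x y z xy yz xz r1 r2 r3 e1 e2
    by (auto intro!: inE simp: c_def)
  moreover have "c < k" using col x y xy by (auto simp: c_def)
  ultimately show False using nc by (auto simp: E_def)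
qed

lemma R_graph_facts:
  "R_graph K4_star k \<le> Bfun k + 1 \<and>
   (\<forall>f :: nat set \<Rightarrow> nat.
      (\<forall>e. e \<subseteq> {..<R_graph K4_star k} \<and> card e = 2 \<longrightarrow> f e < k) \<longrightarrow>
      (\<exists>i<k. \<exists>F\<in>K4_star. contains_copy ({..<R_graph K4_star k}, {e. e \<subseteq> {..<R_graph K4_star k} \<and> card e = 2 \<and> f e = i}) F))"
proof -
  define P where "P = (\<lambda>n. (\<forall>f :: nat set \<Rightarrow> nat.
      (\<forall>e. e \<subseteq> {..<n} \<and> card e = 2 \<longrightarrow> f e < k) \<longrightarrow>
      (\<exists>i<k. \<exists>F\<in>K4_star. contains_copy ({..<n}, {e. e \<subseteq> {..<n} \<and> card e = 2 \<and> f e = i}) F)))"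
  have PB: "P (Bfun k + 1)"
    unfolding P_def
  proof (intro allI impI, rule ccontr)
    fix f :: "nat set \<Rightarrow> nat"
    let ?n = "Bfun k + 1"
    assume col: "\<forall>e. e \<subseteq> {..<?n} \<and> card e = 2 \<longrightarrow> f e < k"
      and nc: "\<not> (\<exists>i<k. \<exists>F\<in>K4_star. contains_copy ({..<?n}, {e. e \<subseteq> {..<?n} \<and> card e = 2 \<and> f e = i}) F)"
    have g: "goodc {..<?n} f" by (rule good_of_nocopy[OF col nc])
    have "\<forall>x\<in>{..<?n}. \<forall>y\<in>{..<?n}. x \<noteq> y \<longrightarrow> f {x,y} \<in> {..<k}"
      using col by auto
    from good_bound[OF _ _ this g] have "card {..<?n} \<le> Bfun (card {..<k})" by simp
    then show False by simp
  qed
  have RG: "R_graph K4_star k = Inf (Collect P)" unfolding R_graph_def P_def by simp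
  have ne: "Collect P \<noteq> {}" using PB by blast
  have "Inf (Collect P) \<in> Collect P" by (rule Inf_nat_def1[OF ne])
  then have h1: "P (R_graph K4_star k)" unfolding RG by simp
  have h2: "R_graph K4_star k \<le> Bfun k + 1" unfolding RG using PB by (simp add: Inf_nat_def Least_le)
  show ?thesis by (intro conjI h2 h1[unfolded P_def])
qed


lemma extract_tri:
  assumes "F \<in> K4_star" "contains_copy (V, E) F"
  shows "\<exists>q1 q2 q3 r1 r2 r3. distinct [q1,q2,q3] \<and> r1 \<notin> {q1,q2,q3} \<and> r2 \<notin> {q1,q2,q3} \<and>
    r3 \<notin> {q1,q2,q3} \<and> {q1,q2,q3,r1,r2,r3} \<subseteq> V \<and>
    {q1,q2} \<in> E \<and> {q1,q3} \<in> E \<and> {q2,q3} \<in> E \<and> {q1,r1} \<in> E \<and> {q2,r2} \<in> E \<and> {q3,r3} \<in> E"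
proof -
  from assms(2) obtain \<phi> where ph: "inj_on \<phi> (fst F)" "\<phi> ` fst F \<subseteq> V" "\<forall>xy\<in>snd F. \<phi> ` xy \<in> E"
    unfolding contains_copy_def by auto
  consider "F = K4" | "F = K4_minus_pendant" | "F = triangle_pendants" using assms(1) by (auto simp: K4_star_def)
  then show ?thesis
  proof cases
    case 1
    show ?thesis
      apply (rule exI[of _ "\<phi> 0"], rule exI[of _ "\<phi> 1"], rule exI[of _ "\<phi> 2"])
      apply (rule exI[of _ "\<phi> 3"], rule exI[of _ "\<phi> 3"], rule exI[of _ "\<phi> 3"])
      using ph unfolding 1 K4_def by (auto simp: inj_on_def)
  next
    case 2
    show ?thesis
      apply (rule exI[of _ "\<phi> 0"], rule exI[of _ "\<phi> 1"], rule exI[of _ "\<phi> 2"])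
      apply (rule exI[of _ "\<phi> 3"], rule exI[of _ "\<phi> 3"], rule exI[of _ "\<phi> 4"])
      using ph unfolding 2 K4_minus_pendant_def by (auto simp: inj_on_def)
  next
    case 3
    show ?thesis
      apply (rule exI[of _ "\<phi> 0"], rule exI[of _ "\<phi> 1"], rule exI[of _ "\<phi> 2"])
      apply (rule exI[of _ "\<phi> 3"], rule exI[of _ "\<phi> 4"], rule exI[of _ "\<phi> 5"])
      using ph unfolding 3 triangle_pendants_def by (auto simp: inj_on_def)
  qed
qed


lemma berge_from:
  fixes N :: nat
  assumes d: "distinct [q1,q2,q3]" and r: "r1 \<notin> {q1,q2,q3}" "r2 \<notin> {q1,q2,q3}" "r3 \<notin> {q1,q2,q3}"
    and V: "{q1,q2,q3,r1,r2,r3} \<subseteq> {..<N}"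
    and c: "f {N,q1,q2} = i" "f {N,q1,q3} = i" "f {N,q2,q3} = i"
       "f {N,q1,r1} = i" "f {N,q2,r2} = i" "f {N,q3,r3} = i"
  shows "\<exists>H'. subhypergraph H' ({..<N+1}, {e. e \<subseteq> {..<N+1} \<and> card e = 3 \<and> f e = i}) \<and> is_berge H' K4"
proof -
  let ?H = "({..<N+1}, {e. e \<subseteq> {..<N+1} \<and> card e = 3 \<and> f e = i})"
  have sub: "subhypergraph ?H ?H" by (auto simp: subhypergraph_def)
  define ph where "ph j = [N,q1,q2,q3] ! j" for j :: nat
  define ee where "ee s = (if s = {0,1} then {N,q1,r1} else if s = {0,2} then {N,q2,r2}
     else if s = {0,3} then {N,q3,r3} else if s = {1,2} then {N,q1,q2}
     else if s = {1,3} then {N,q1,q3} else {N,q2,q3})" for s :: "nat set"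
  have Nn: "N \<notin> {q1,q2,q3,r1,r2,r3}" using V by auto
  have ne: "{0::nat,1} \<noteq> {0,2}" "{0::nat,1} \<noteq> {0,3}" "{0::nat,1} \<noteq> {1,2}" "{0::nat,1} \<noteq> {1,3}"
     "{0::nat,1} \<noteq> {2,3}" "{0::nat,2} \<noteq> {0,3}" "{0::nat,2} \<noteq> {1,2}" "{0::nat,2} \<noteq> {1,3}"
     "{0::nat,2} \<noteq> {2,3}" "{0::nat,3} \<noteq> {1,2}" "{0::nat,3} \<noteq> {1,3}" "{0::nat,3} \<noteq> {2,3}"
     "{1::nat,2} \<noteq> {1,3}" "{1::nat,2} \<noteq> {2,3}" "{1::nat,3} \<noteq> {2,3}"
    by (auto simp: doubleton_eq_iff)
  have vals: "ee {0,1} = {N,q1,r1}" "ee {0,2} = {N,q2,r2}" "ee {0,3} = {N,q3,r3}"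
    "ee {1,2} = {N,q1,q2}" "ee {1,3} = {N,q1,q3}" "ee {2,3} = {N,q2,q3}"
    using ne by (simp_all add: ee_def)
  have dist: "{N,q1,r1} \<noteq> {N,q2,r2}" "{N,q1,r1} \<noteq> {N,q3,r3}" "{N,q1,r1} \<noteq> {N,q1,q2}"
    "{N,q1,r1} \<noteq> {N,q1,q3}" "{N,q1,r1} \<noteq> {N,q2,q3}"
    "{N,q2,r2} \<noteq> {N,q3,r3}" "{N,q2,r2} \<noteq> {N,q1,q2}" "{N,q2,r2} \<noteq> {N,q1,q3}" "{N,q2,r2} \<noteq> {N,q2,q3}"
    "{N,q3,r3} \<noteq> {N,q1,q2}" "{N,q3,r3} \<noteq> {N,q1,q3}" "{N,q3,r3} \<noteq> {N,q2,q3}"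
    "{N,q1,q2} \<noteq> {N,q1,q3}" "{N,q1,q2} \<noteq> {N,q2,q3}" "{N,q1,q3} \<noteq> {N,q2,q3}"
    using d r Nn by (auto simp: set_eq_iff)
  have inj: "inj_on ee (snd K4)"
    unfolding K4_def snd_conv inj_on_def using vals dist ne by auto
  have img: "ee ` snd K4 \<subseteq> snd ?H"
    unfolding K4_def snd_conv using vals c d r V Nn by auto
  have phi: "inj_on ph (fst K4)" "ph ` fst K4 \<subseteq> fst ?H"
    unfolding K4_def fst_conv ph_def inj_on_def using d V Nn by auto
  have cov: "\<forall>xy\<in>snd K4. ph ` xy \<subseteq> ee xy"
    unfolding K4_def snd_conv using vals by (auto simp: ph_def)
  have "is_berge ?H K4"
    unfolding is_berge_def using inj img phi cov by blast
  with sub show ?thesis by blast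
qed


lemma R3_facts:
  "R3_berge K4 k \<le> R_graph K4_star k + 1 \<and>
   (\<forall>f :: nat set \<Rightarrow> nat.
      (\<forall>e. e \<subseteq> {..<R3_berge K4 k} \<and> card e = 3 \<longrightarrow> f e < k) \<longrightarrow>
      (\<exists>i<k. \<exists>H'. subhypergraph H' ({..<R3_berge K4 k}, {e. e \<subseteq> {..<R3_berge K4 k} \<and> card e = 3 \<and> f e = i})
                  \<and> is_berge H' K4))"
proof -
  define P where "P = (\<lambda>n. \<forall>f :: nat set \<Rightarrow> nat.
      (\<forall>e. e \<subseteq> {..<n} \<and> card e = 3 \<longrightarrow> f e < k) \<longrightarrow>
      (\<exists>i<k. \<exists>H'. subhypergraph H' ({..<n}, {e. e \<subseteq> {..<n} \<and> card e = 3 \<and> f e = i})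
                  \<and> is_berge H' K4))"
  define N where "N = R_graph K4_star k"
  have RGf: "\<forall>g :: nat set \<Rightarrow> nat.
      (\<forall>e. e \<subseteq> {..<N} \<and> card e = 2 \<longrightarrow> g e < k) \<longrightarrow>
      (\<exists>i<k. \<exists>F\<in>K4_star. contains_copy ({..<N}, {e. e \<subseteq> {..<N} \<and> card e = 2 \<and> g e = i}) F)"
    using R_graph_facts[of k] unfolding N_def by blast
  have PN: "P (N + 1)"
    unfolding P_def
  proof (intro allI impI)
    fix f :: "nat set \<Rightarrow> nat"
    assume col: "\<forall>e. e \<subseteq> {..<N+1} \<and> card e = 3 \<longrightarrow> f e < k"
    define g where "g e = f (insert N e)" for e
    have colg: "\<forall>e. e \<subseteq> {..<N} \<and> card e = 2 \<longrightarrow> g e < k"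
    proof (intro allI impI)
      fix e assume e: "e \<subseteq> {..<N} \<and> card e = 2"
      then have "finite e" "N \<notin> e" by (auto intro: card_ge_0_finite)
      then have "card (insert N e) = 3" using e by simp
      moreover have "insert N e \<subseteq> {..<N+1}" using e by auto
      ultimately show "g e < k" using col by (simp add: g_def)
    qed
    obtain i F where iF: "i < k" "F \<in> K4_star"
      "contains_copy ({..<N}, {e. e \<subseteq> {..<N} \<and> card e = 2 \<and> g e = i}) F"
      using mp[OF spec[OF RGf, of g] colg] by blast
    obtain q1 q2 q3 r1 r2 r3 where Q: "distinct [q1,q2,q3]" "r1 \<notin> {q1,q2,q3}" "r2 \<notin> {q1,q2,q3}"
      "r3 \<notin> {q1,q2,q3}" "{q1,q2,q3,r1,r2,r3} \<subseteq> {..<N}"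
      "{q1,q2} \<in> {e. e \<subseteq> {..<N} \<and> card e = 2 \<and> g e = i}"
      "{q1,q3} \<in> {e. e \<subseteq> {..<N} \<and> card e = 2 \<and> g e = i}"
      "{q2,q3} \<in> {e. e \<subseteq> {..<N} \<and> card e = 2 \<and> g e = i}"
      "{q1,r1} \<in> {e. e \<subseteq> {..<N} \<and> card e = 2 \<and> g e = i}"
      "{q2,r2} \<in> {e. e \<subseteq> {..<N} \<and> card e = 2 \<and> g e = i}"
      "{q3,r3} \<in> {e. e \<subseteq> {..<N} \<and> card e = 2 \<and> g e = i}"
      using extract_tri[OF iF(2,3)] by (elim exE conjE) (rule that; assumption)
    have "\<exists>H'. subhypergraph H' ({..<N+1}, {e. e \<subseteq> {..<N+1} \<and> card e = 3 \<and> f e = i}) \<and> is_berge H' K4"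
      by (rule berge_from[OF Q(1-5)]) (use Q(6-11) in \<open>simp_all add: g_def\<close>)
    then show "\<exists>i<k. \<exists>H'. subhypergraph H' ({..<N+1}, {e. e \<subseteq> {..<N+1} \<and> card e = 3 \<and> f e = i}) \<and> is_berge H' K4"
      using iF(1) by blast
  qed
  have RG: "R3_berge K4 k = Inf (Collect P)" unfolding R3_berge_def P_def by simp
  have ne: "Collect P \<noteq> {}" using PN by blast
  have "Inf (Collect P) \<in> Collect P" by (rule Inf_nat_def1[OF ne])
  then have h1: "P (R3_berge K4 k)" unfolding RG by simp
  have h2: "R3_berge K4 k \<le> N + 1" unfolding RG using PN by (simp add: Inf_nat_def Least_le)
  show ?thesis by (intro conjI h2[unfolded N_def] h1[unfolded P_def])
qed



definition GG :: "nat \<Rightarrow> (nat \<Rightarrow> nat) set" where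
  "GG n = PiE {..<n} (\<lambda>_. {..<3})"

definition fib :: "nat \<Rightarrow> nat \<Rightarrow> nat \<Rightarrow> nat \<Rightarrow> nat \<times> nat \<times> nat \<Rightarrow> (nat \<Rightarrow> nat) set" where
  "fib n a b c t = {g \<in> GG n. g a = fst t \<and> g b = fst (snd t) \<and> g c = snd (snd t)}"

lemma finite_GG: "finite (GG n)" by (simp add: GG_def finite_PiE)

lemma upd_GG: "g \<in> GG n \<Longrightarrow> a < n \<Longrightarrow> v < 3 \<Longrightarrow> g(a := v) \<in> GG n"
  unfolding GG_def using PiE_fun_upd[of v "\<lambda>_. {..<3::nat}" a g "{..<n}"] by (simp add: insert_absorb)

lemma upd3_inv: "g a = x \<Longrightarrow> g b = y \<Longrightarrow> g c = z \<Longrightarrow> a \<noteq> b \<Longrightarrow> b \<noteq> c \<Longrightarrow> a \<noteq> c \<Longrightarrow>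
   g(a := p, b := q, c := r, a := x, b := y, c := z) = g"
  by (rule ext) simp

lemma fib_card:
  assumes abc: "a < n" "b < n" "c < n" "a \<noteq> b" "b \<noteq> c" "a \<noteq> c"
    and t: "t \<in> {..<3} \<times> {..<3} \<times> {..<3}"
  shows "card (fib n a b c t) = card (fib n a b c (0,0,0))"
proof -
  obtain x y z where xyz: "t = (x,y,z)" by (cases t) auto
  have xyz3: "x < 3" "y < 3" "z < 3" using t xyz by auto
  define u where "u g = g(a := 0, b := 0, c := 0)" for g :: "nat \<Rightarrow> nat"
  define u' where "u' g = g(a := x, b := y, c := z)" for g :: "nat \<Rightarrow> nat"
  have "bij_betw u (fib n a b c t) (fib n a b c (0,0,0))"
  proof (rule bij_betw_byWitness[where f' = u'])
    show "\<forall>g\<in>fib n a b c t. u' (u g) = g"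
    proof
      fix g assume "g \<in> fib n a b c t"
      then have "g a = x" "g b = y" "g c = z" by (simp_all add: fib_def xyz)
      then show "u' (u g) = g" unfolding u_def u'_def using abc(4-6) by (rule upd3_inv)
    qed
    show "\<forall>g\<in>fib n a b c (0,0,0). u (u' g) = g"
    proof
      fix g assume "g \<in> fib n a b c (0,0,0)"
      then have "g a = 0" "g b = 0" "g c = 0" by (simp_all add: fib_def)
      then show "u (u' g) = g" unfolding u_def u'_def using abc(4-6) by (rule upd3_inv)
    qed
    show "u ` fib n a b c t \<subseteq> fib n a b c (0,0,0)"
    proof
      fix h assume "h \<in> u ` fib n a b c t"
      then obtain g where g: "g \<in> fib n a b c t" "h = u g" by blast
      have "g \<in> GG n" using g by (simp add: fib_def)
      then have "u g \<in> GG n" unfolding u_def using abc by (intro upd_GG) auto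
      moreover have "u g a = 0" "u g b = 0" "u g c = 0" using abc by (simp_all add: u_def)
      ultimately show "h \<in> fib n a b c (0,0,0)" using g by (simp add: fib_def)
    qed
    show "u' ` fib n a b c (0,0,0) \<subseteq> fib n a b c t"
    proof
      fix h assume "h \<in> u' ` fib n a b c (0,0,0)"
      then obtain g where g: "g \<in> fib n a b c (0,0,0)" "h = u' g" by blast
      have "g \<in> GG n" using g by (simp add: fib_def)
      then have "u' g \<in> GG n" unfolding u'_def using abc xyz3 by (intro upd_GG) auto
      moreover have "u' g a = x" "u' g b = y" "u' g c = z" using abc by (simp_all add: u'_def)
      ultimately show "h \<in> fib n a b c t" using g by (simp add: fib_def xyz)
    qed
  qed
  then show ?thesis by (rule bij_betw_same_card)
qed

lemma count_by_fib:
  assumes abc: "a < n" "b < n" "c < n" "a \<noteq> b" "b \<noteq> c" "a \<noteq> c"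
  shows "card {g \<in> GG n. P (g a) (g b) (g c)} =
     card {t \<in> {..<3} \<times> {..<3} \<times> {..<3}. P (fst t) (fst (snd t)) (snd (snd t))} * card (fib n a b c (0,0,0))"
proof -
  let ?I = "{t \<in> {..<3::nat} \<times> {..<3::nat} \<times> {..<3::nat}. P (fst t) (fst (snd t)) (snd (snd t))}"
  have eq: "{g \<in> GG n. P (g a) (g b) (g c)} = (\<Union>t\<in>?I. fib n a b c t)"
  proof (rule set_eqI, rule iffI)
    fix g assume g: "g \<in> {g \<in> GG n. P (g a) (g b) (g c)}"
    then have "g a < 3" "g b < 3" "g c < 3" using abc by (auto simp: GG_def PiE_def Pi_def)
    moreover have "P (g a) (g b) (g c)" using g by blast
    ultimately have "(g a, g b, g c) \<in> ?I"
      by (intro CollectI conjI SigmaI lessThan_iff[THEN iffD2]) simp_all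
    moreover have "g \<in> fib n a b c (g a, g b, g c)" using g by (simp add: fib_def)
    ultimately show "g \<in> (\<Union>t\<in>?I. fib n a b c t)" by blast
  next
    fix g assume "g \<in> (\<Union>t\<in>?I. fib n a b c t)"
    then obtain t where t: "t \<in> ?I" "g \<in> fib n a b c t" by blast
    from t(2) have "g \<in> GG n" "g a = fst t" "g b = fst (snd t)" "g c = snd (snd t)"
      unfolding fib_def by blast+
    moreover from t(1) have "P (fst t) (fst (snd t)) (snd (snd t))" by blast
    ultimately show "g \<in> {g \<in> GG n. P (g a) (g b) (g c)}" by simp
  qed
  have "card (\<Union>t\<in>?I. fib n a b c t) = (\<Sum>t\<in>?I. card (fib n a b c t))"
  proof (rule card_UN_disjoint)
    show "finite ?I" by (rule finite_subset[of _ "{..<3} \<times> {..<3} \<times> {..<3}"]) (blast, simp)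
    show "\<forall>t\<in>?I. finite (fib n a b c t)"
      by (intro ballI finite_subset[OF _ finite_GG]) (unfold fib_def, blast)
    show "\<forall>t\<in>?I. \<forall>t'\<in>?I. t \<noteq> t' \<longrightarrow> fib n a b c t \<inter> fib n a b c t' = {}"
    proof (intro ballI impI)
      fix t t' :: "nat \<times> nat \<times> nat" assume "t \<noteq> t'"
      show "fib n a b c t \<inter> fib n a b c t' = {}"
      proof (rule ccontr)
        assume "fib n a b c t \<inter> fib n a b c t' \<noteq> {}"
        then obtain g where "g \<in> fib n a b c t" "g \<in> fib n a b c t'" by blast
        then have "fst t = fst t'" "fst (snd t) = fst (snd t')" "snd (snd t) = snd (snd t')"
          by (auto simp: fib_def)
        then have "t = t'" by (simp add: prod_eq_iff)
        with \<open>t \<noteq> t'\<close> show False by simp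
      qed
    qed
  qed
  also have "\<dots> = (\<Sum>t\<in>?I. card (fib n a b c (0,0,0)))"
  proof (rule sum.cong[OF refl])
    fix t assume "t \<in> ?I"
    then have "t \<in> {..<3} \<times> {..<3} \<times> {..<3}" by blast
    then show "card (fib n a b c t) = card (fib n a b c (0,0,0))" by (rule fib_card[OF abc])
  qed
  finally have "card (\<Union>t\<in>?I. fib n a b c t) = card ?I * card (fib n a b c (0,0,0))"
    by (simp only: sum_constant of_nat_id)
  then show ?thesis by (simp only: eq)
qed


lemma l3: "{..<3::nat} = {0,1,2}" by auto

lemma card_GG: "card (GG n) = 3 ^ n"
  by (simp add: GG_def card_PiE)

lemma trip_mem: fixes x y z :: nat assumes "x < 3" "y < 3" "z < 3" "x \<noteq> y" "y \<noteq> z" "x \<noteq> z"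
  shows "(x,y,z) \<in> {(0,1,2),(0,2,1),(1,0,2),(1,2,0),(2,0,1),(2,1,0)}"
proof -
  have "x = 0 \<or> x = 1 \<or> x = 2" "y = 0 \<or> y = 1 \<or> y = 2" "z = 0 \<or> z = 1 \<or> z = 2" using assms by auto
  then show ?thesis using assms by auto
qed

lemma trip_card: "card {t \<in> {..<3::nat} \<times> {..<3::nat} \<times> {..<3::nat}. fst t \<noteq> fst (snd t) \<and> fst (snd t) \<noteq> snd (snd t) \<and> fst t \<noteq> snd (snd t)} = 6"
proof -
  have "{t \<in> {..<3::nat} \<times> {..<3::nat} \<times> {..<3::nat}. fst t \<noteq> fst (snd t) \<and> fst (snd t) \<noteq> snd (snd t) \<and> fst t \<noteq> snd (snd t)}
    = {(0,1,2),(0,2,1),(1,0,2),(1,2,0),(2,0,1),(2,1,0)}" (is "?A = ?B")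
  proof
    show "?A \<subseteq> ?B"
    proof
      fix t assume tA: "t \<in> ?A"
      obtain x y z where t: "t = (x,y,z)" by (cases t) blast
      from tA have "x < 3 \<and> y < 3 \<and> z < 3 \<and> x\<noteq>y \<and> y\<noteq>z \<and> x\<noteq>z"
        unfolding t by (simp only: mem_Collect_eq mem_Sigma_iff lessThan_iff fst_conv snd_conv simp_thms)
      then show "t \<in> ?B" unfolding t using trip_mem by blast
    qed
    show "?B \<subseteq> ?A" by simp
  qed
  then show ?thesis by simp
qed

lemma bad_count:
  assumes abc: "a < n" "b < n" "c < n" "a \<noteq> b" "b \<noteq> c" "a \<noteq> c"
  shows "9 * card {g \<in> GG n. \<not> inj_on g {a,b,c}} = 7 * card (GG n)"
proof -
  define F where "F = card (fib n a b c (0,0,0))"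
  have all: "card (GG n) = 27 * F"
  proof -
    have "card {g \<in> GG n. (\<lambda>x y z. True) (g a) (g b) (g c)} =
      card {t \<in> {..<3::nat} \<times> {..<3::nat} \<times> {..<3::nat}. (\<lambda>x y z. True) (fst t) (fst (snd t)) (snd (snd t))} * F"
      unfolding F_def by (rule count_by_fib[OF abc])
    then show ?thesis by simp
  qed
  have good: "card {g \<in> GG n. g a \<noteq> g b \<and> g b \<noteq> g c \<and> g a \<noteq> g c} = 6 * F"
  proof -
    have "card {g \<in> GG n. (\<lambda>x y z. x \<noteq> y \<and> y \<noteq> z \<and> x \<noteq> z) (g a) (g b) (g c)} =
      card {t \<in> {..<3::nat} \<times> {..<3::nat} \<times> {..<3::nat}. (\<lambda>x y z. x \<noteq> y \<and> y \<noteq> z \<and> x \<noteq> z) (fst t) (fst (snd t)) (snd (snd t))} * F"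
      unfolding F_def by (rule count_by_fib[OF abc])
    then show ?thesis using trip_card by simp
  qed
  have eqg: "{g \<in> GG n. inj_on g {a,b,c}} = {g \<in> GG n. g a \<noteq> g b \<and> g b \<noteq> g c \<and> g a \<noteq> g c}"
    using abc by (auto simp: inj_on_def)
  have eqb: "{g \<in> GG n. \<not> inj_on g {a,b,c}} = GG n - {g \<in> GG n. inj_on g {a,b,c}}" by blast
  have "card {g \<in> GG n. \<not> inj_on g {a,b,c}} = card (GG n) - card {g \<in> GG n. inj_on g {a,b,c}}"
    unfolding eqb by (rule card_Diff_subset) (auto intro: finite_subset[OF _ finite_GG])
  then have "card {g \<in> GG n. \<not> inj_on g {a,b,c}} = 21 * F" using all good eqg by simp
  then show ?thesis using all by simp
qed

definition Fs :: "nat \<Rightarrow> nat \<Rightarrow> (nat \<Rightarrow> nat \<Rightarrow> nat) set" where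
  "Fs k n = PiE {..<k} (\<lambda>_. GG n)"

lemma card_Tset: "card {T. T \<subseteq> {..<n::nat} \<and> card T = 3} \<le> n ^ 3"
proof -
  have "card {T. T \<subseteq> {..<n::nat} \<and> card T = 3} = n choose 3"
    using n_subsets[of "{..<n}" 3] by simp
  also have "\<dots> \<le> n ^ 3"
  proof (cases "3 \<le> n")
    case True thus ?thesis by (rule binomial_le_pow)
  next
    case False thus ?thesis by (simp add: binomial_eq_0)
  qed
  finally show ?thesis .
qed

lemma exists_hash:
  assumes num: "n ^ 3 * 7 ^ k < (9::nat) ^ k"
  shows "\<exists>h\<in>Fs k n. \<forall>T. T \<subseteq> {..<n} \<and> card T = 3 \<longrightarrow> (\<exists>j<k. inj_on (h j) T)"
proof (rule ccontr)
  assume neg: "\<not> ?thesis"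
  define Tset where "Tset = {T. T \<subseteq> {..<n::nat} \<and> card T = 3}"
  define Bad where "Bad T = PiE {..<k} (\<lambda>_. {g \<in> GG n. \<not> inj_on g T})" for T
  have finFs: "finite (Fs k n)" by (simp add: Fs_def finite_PiE finite_GG)
  have cardFs: "card (Fs k n) = card (GG n) ^ k" by (simp add: Fs_def card_PiE)
  have posFs: "card (Fs k n) > 0" unfolding cardFs card_GG by simp
  have sub: "Fs k n \<subseteq> (\<Union>T\<in>Tset. Bad T)"
  proof
    fix h assume h: "h \<in> Fs k n"
    from neg h have "\<not> (\<forall>T. T \<subseteq> {..<n} \<and> card T = 3 \<longrightarrow> (\<exists>j<k. inj_on (h j) T))" by blast
    then obtain T where T: "T \<subseteq> {..<n}" "card T = 3" "\<forall>j<k. \<not> inj_on (h j) T" by blast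
    have "h \<in> Bad T" using h T(3) by (simp add: Bad_def Fs_def PiE_iff)
    then show "h \<in> (\<Union>T\<in>Tset. Bad T)" using T by (auto simp: Tset_def)
  qed
  have badc: "9 ^ k * card (Bad T) = 7 ^ k * card (Fs k n)" if T: "T \<in> Tset" for T
  proof -
    obtain a b c where abc: "T = {a,b,c}" "a \<noteq> b" "b \<noteq> c" "a \<noteq> c"
    proof -
      from T have "card T = 3" by (simp add: Tset_def)
      then show ?thesis using that unfolding card_3_iff by blast
    qed
    have lt: "a < n" "b < n" "c < n" using T abc by (auto simp: Tset_def)
    have bc: "9 * card {g \<in> GG n. \<not> inj_on g T} = 7 * card (GG n)"
      unfolding abc(1) by (rule bad_count[OF lt abc(2-4)])
    have "card (Bad T) = card {g \<in> GG n. \<not> inj_on g T} ^ k" by (simp add: Bad_def card_PiE)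
    then have "9 ^ k * card (Bad T) = (9 * card {g \<in> GG n. \<not> inj_on g T}) ^ k"
      by (simp add: power_mult_distrib)
    also have "\<dots> = 7 ^ k * card (Fs k n)" unfolding bc cardFs by (simp add: power_mult_distrib)
    finally show ?thesis .
  qed
  have finT: "finite Tset" unfolding Tset_def by (rule finite_subset[of _ "Pow {..<n}"]) auto
  have "card (Fs k n) \<le> card (\<Union>T\<in>Tset. Bad T)"
    by (rule card_mono[OF _ sub]) (use finT in \<open>auto simp: Bad_def finite_PiE finite_GG\<close>)
  also have "\<dots> \<le> (\<Sum>T\<in>Tset. card (Bad T))" by (rule card_UN_le[OF finT])
  finally have "9 ^ k * card (Fs k n) \<le> 9 ^ k * (\<Sum>T\<in>Tset. card (Bad T))" by simp
  also have "\<dots> = (\<Sum>T\<in>Tset. 9 ^ k * card (Bad T))" by (simp add: sum_distrib_left)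
  also have "\<dots> = (\<Sum>T\<in>Tset. 7 ^ k * card (Fs k n))" by (rule sum.cong[OF refl]) (rule badc)
  also have "\<dots> = card Tset * (7 ^ k * card (Fs k n))" by simp
  also have "\<dots> \<le> n ^ 3 * (7 ^ k * card (Fs k n))"
    by (rule mult_right_mono) (unfold Tset_def, rule card_Tset, simp)
  finally have "9 ^ k * card (Fs k n) \<le> (n ^ 3 * 7 ^ k) * card (Fs k n)" by (simp add: mult.assoc)
  moreover have "(n ^ 3 * 7 ^ k) * card (Fs k n) < 9 ^ k * card (Fs k n)"
    using num posFs by simp
  ultimately show False by simp
qed


lemma num_ineq:
  assumes "k \<ge> (1::nat)"
  shows "(2 ^ (k div 9)) ^ 3 * 7 ^ k < (9::nat) ^ k"
proof -
  define m where "m = k div 9"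
  define r where "r = k mod 9"
  have k: "k = 9 * m + r" unfolding m_def r_def by simp
  have e8: "(2::nat) ^ 3 = 8" by simp
  have l1: "((2::nat) ^ m) ^ 3 = 8 ^ m" by (metis power_mult mult.commute e8)
  have l2: "(7::nat) ^ k = (7 ^ 9) ^ m * 7 ^ r" unfolding k by (simp add: power_add power_mult)
  have l: "(2 ^ m) ^ 3 * 7 ^ k = (8 * 7 ^ 9) ^ m * (7::nat) ^ r"
    unfolding l1 l2 by (simp only: power_mult_distrib mult.assoc)
  have rr: "(9::nat) ^ k = (9 ^ 9) ^ m * 9 ^ r"
    unfolding k by (simp add: power_add power_mult)
  have c: "(8 * 7 ^ 9 :: nat) < 9 ^ 9" by simp
  have lr: "(7::nat) ^ r \<le> 9 ^ r" by (rule power_mono) auto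
  show ?thesis
  proof (cases "m = 0")
    case True
    then have "r \<ge> 1" using k assms by simp
    then have "(7::nat) ^ r < 9 ^ r" by (intro power_strict_mono) auto
    then show ?thesis using l rr True by (simp add: m_def)
  next
    case False
    then have a1: "(8 * 7 ^ 9 :: nat) ^ m < (9 ^ 9) ^ m" using c by (intro power_strict_mono) auto
    have a2: "(0::nat) < 7 ^ r" by simp
    have "(8 * 7 ^ 9 :: nat) ^ m * 7 ^ r < (9 ^ 9) ^ m * 9 ^ r"
      by (rule mult_less_le_imp_less[OF a1 lr]) (simp_all add: a2)
    then show ?thesis using l rr by (simp add: m_def)
  qed
qed

lemma R3_lower:
  assumes k1: "k \<ge> 1"
  shows "2 ^ (k div 9) + 1 \<le> R3_berge K4 k"
proof (rule ccontr)
  define n where "n = (2::nat) ^ (k div 9)"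
  define R where "R = R3_berge K4 k"
  assume "\<not> 2 ^ (k div 9) + 1 \<le> R3_berge K4 k"
  then have Rn: "R \<le> n" unfolding n_def R_def by simp
  obtain h where h: "h \<in> Fs k n" "\<forall>T. T \<subseteq> {..<n} \<and> card T = 3 \<longrightarrow> (\<exists>j<k. inj_on (h j) T)"
    using exists_hash[OF num_ineq[OF k1]] unfolding n_def by blast
  define col where "col T = (LEAST j. j < k \<and> inj_on (h j) T)" for T
  have colprop: "col T < k \<and> inj_on (h (col T)) T" if "T \<subseteq> {..<n}" "card T = 3" for T
  proof -
    have "\<exists>j. j < k \<and> inj_on (h j) T" using h(2) that by blast
    then show ?thesis unfolding col_def by (rule LeastI_ex[where P = "\<lambda>j. j < k \<and> inj_on (h j) T"])
  qed
  have hval: "h j x < 3" if "j < k" "x < n" for j x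
    using h(1) that by (auto simp: Fs_def GG_def PiE_iff)
  have colR: "\<forall>e. e \<subseteq> {..<R} \<and> card e = 3 \<longrightarrow> col e < k"
  proof (intro allI impI)
    fix e assume e: "e \<subseteq> {..<R} \<and> card e = 3"
    then have "e \<subseteq> {..<n}" using Rn by auto
    then show "col e < k" using colprop[of e] e by simp
  qed
  have PR: "\<forall>f::nat set \<Rightarrow> nat. (\<forall>e. e \<subseteq> {..<R} \<and> card e = 3 \<longrightarrow> f e < k) \<longrightarrow> (\<exists>i<k. \<exists>H'. subhypergraph H' ({..<R}, {e. e \<subseteq> {..<R} \<and> card e = 3 \<and> f e = i})
                  \<and> is_berge H' K4)"
    unfolding R_def by (rule conjunct2[OF R3_facts])
  have "\<exists>i<k. \<exists>H'. subhypergraph H' ({..<R}, {e. e \<subseteq> {..<R} \<and> card e = 3 \<and> col e = i})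
                  \<and> is_berge H' K4"
    by (rule mp[OF spec[OF PR, of col] colR])
  then obtain i H' where i: "i < k" and sub: "subhypergraph H' ({..<R}, {e. e \<subseteq> {..<R} \<and> card e = 3 \<and> col e = i})"
    and ib: "is_berge H' K4" by blast
  from ib obtain \<phi> ee where ph: "inj_on \<phi> (fst K4)" "\<phi> ` fst K4 \<subseteq> fst H'"
    "ee ` snd K4 \<subseteq> snd H'" "\<forall>xy \<in> snd K4. \<phi> ` xy \<subseteq> ee xy"
    unfolding is_berge_def by (elim exE conjE) (rule that; assumption)
  have subs: "fst H' \<subseteq> {..<R}" "snd H' \<subseteq> {e. e \<subseteq> {..<R} \<and> card e = 3 \<and> col e = i}"
    using sub by (auto simp: subhypergraph_def)
  have pairs: "{x,y} \<in> snd K4" if "x \<in> {0,1,2,3::nat}" "y \<in> {0,1,2,3}" "x \<noteq> y" for x y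
    using that unfolding K4_def snd_conv by (simp add: doubleton_eq_iff) arith
  have V4: "fst K4 = {0,1,2,3}" by (simp add: K4_def)
  have inj: "inj_on (h i \<circ> \<phi>) {0,1,2,3}"
  proof (rule inj_onI)
    fix x y assume x: "x \<in> {0,1,2,3::nat}" and y: "y \<in> {0,1,2,3::nat}" and eq: "(h i \<circ> \<phi>) x = (h i \<circ> \<phi>) y"
    show "x = y"
    proof (rule ccontr)
      assume xy: "x \<noteq> y"
      have p: "{x,y} \<in> snd K4" by (rule pairs[OF x y xy])
      then have e: "ee {x,y} \<in> snd H'" using ph(3) by blast
      then have e2: "ee {x,y} \<subseteq> {..<R}" "card (ee {x,y}) = 3" "col (ee {x,y}) = i" using subs(2) by blast+
      have "ee {x,y} \<subseteq> {..<n}" using e2(1) Rn by auto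
      then have "col (ee {x,y}) < k \<and> inj_on (h (col (ee {x,y}))) (ee {x,y})" by (rule colprop[OF _ e2(2)])
      then have ihi: "inj_on (h i) (ee {x,y})" using e2(3) by simp
      have m: "\<phi> x \<in> ee {x,y}" "\<phi> y \<in> ee {x,y}" using ph(4) p by blast+
      have "\<phi> x \<noteq> \<phi> y"
      proof
        assume "\<phi> x = \<phi> y"
        then have "x = y" by (rule inj_onD[OF ph(1)[unfolded V4] _ x y])
        with xy show False by simp
      qed
      moreover have "h i (\<phi> x) = h i (\<phi> y)" using eq by simp
      then have "\<phi> x = \<phi> y" by (rule inj_onD[OF ihi _ m])
      ultimately show False by simp
    qed
  qed
  have img: "(h i \<circ> \<phi>) ` {0,1,2,3} \<subseteq> {..<3}"
  proof
    fix w assume "w \<in> (h i \<circ> \<phi>) ` {0,1,2,3}"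
    then obtain x where x: "x \<in> {0,1,2,3::nat}" "w = h i (\<phi> x)" by auto
    have "\<phi> x \<in> fst H'" using ph(2) x(1) unfolding V4 by blast
    then have "\<phi> x < n" using subs(1) Rn by auto
    then show "w \<in> {..<3}" using hval[OF i] x(2) by simp
  qed
  have "card {0,1,2,3::nat} \<le> card {..<3::nat}"
    by (rule card_inj_on_le[OF inj img]) simp
  then show False by simp
qed

lemma powr_part:
  assumes "k \<ge> (2::nat)"
  shows "2 powr (1/27 * real k) \<le> real (2 ^ (k div 9) + 1)"
proof (cases "k div 9 = 0")
  case True
  then have "k < 9" by simp
  then have "1/27 * real k \<le> 1" by simp
  then have "2 powr (1/27 * real k) \<le> 2 powr 1" by (intro powr_mono) auto
  then show ?thesis using True by simp
next
  case False
  define m where "m = k div 9"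
  have "k \<le> 9 * m + 8" unfolding m_def by simp
  moreover have "m \<ge> 1" using False m_def by simp
  ultimately have "real k \<le> 27 * real m" by linarith
  then have "1/27 * real k \<le> real m" by simp
  then have "2 powr (1/27 * real k) \<le> 2 powr real m" by (intro powr_mono) auto
  also have "\<dots> = 2 ^ m" by (simp add: powr_realpow)
  finally show ?thesis unfolding m_def by simp
qed

theorem theorem4:
  shows "(\<exists>c::real. c > 0 \<and> (\<forall>k::nat. k \<ge> 2 \<longrightarrow>
            2 powr (c * real k) \<le> real (R3_berge K4 k) \<and>
            R3_berge K4 k \<le> R_graph K4_star k + 1))
       \<and> (\<exists>g :: nat \<Rightarrow> real. g \<longlonglongrightarrow> 0 \<and>
            (\<forall>\<^sub>F k in sequentially.
               real (R_graph K4_star k) \<le> exp 1 * (1 + g k) * real (k - 1) * fact k))"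
proof (intro conjI)
  show "\<exists>c::real. c > 0 \<and> (\<forall>k::nat. k \<ge> 2 \<longrightarrow>
            2 powr (c * real k) \<le> real (R3_berge K4 k) \<and>
            R3_berge K4 k \<le> R_graph K4_star k + 1)"
  proof (intro exI[of _ "1/27"] conjI allI impI)
    fix k :: nat assume k: "k \<ge> 2"
    have "2 powr (1/27 * real k) \<le> real (2 ^ (k div 9) + 1)" by (rule powr_part[OF k])
    also have "\<dots> \<le> real (R3_berge K4 k)"
    proof -
      have "2 ^ (k div 9) + 1 \<le> R3_berge K4 k" using R3_lower[of k] k by simp
      then show ?thesis by (simp only: of_nat_le_iff)
    qed
    finally show "2 powr (1/27 * real k) \<le> real (R3_berge K4 k)" .
    show "R3_berge K4 k \<le> R_graph K4_star k + 1" using R3_facts[of k] by blast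
  qed simp
  show "\<exists>g :: nat \<Rightarrow> real. g \<longlonglongrightarrow> 0 \<and>
            (\<forall>\<^sub>F k in sequentially.
               real (R_graph K4_star k) \<le> exp 1 * (1 + g k) * real (k - 1) * fact k)"
  proof (intro exI[of _ "\<lambda>_. 0"] conjI)
    show "(\<lambda>_. 0::real) \<longlonglongrightarrow> 0" by simp
    show "\<forall>\<^sub>F k in sequentially. real (R_graph K4_star k) \<le> exp 1 * (1 + 0) * real (k - 1) * fact k"
    proof (rule eventually_sequentiallyI[of 6])
      fix k :: nat assume k: "6 \<le> k"
      have f1: "(1::nat) \<le> fact k" by (simp add: fact_ge_1)
      have "R_graph K4_star k \<le> Bfun k + 1" using R_graph_facts[of k] by blast
      also have "\<dots> \<le> 10 * fact k"
      proof -
        have "(10::nat) \<le> 10 * fact k" using f1 by simp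
        moreover have "Bfun k = 10 * fact k - 5" using k by (simp add: Bfun_def)
        ultimately show ?thesis by linarith
      qed
      finally have "R_graph K4_star k \<le> 10 * fact k" .
      then have "real (R_graph K4_star k) \<le> real (10 * fact k)" by (simp only: of_nat_le_iff)
      then have "real (R_graph K4_star k) \<le> 10 * real (fact k)" by simp
      also have "\<dots> \<le> (exp 1 * real (k - 1)) * real (fact k)"
      proof (rule mult_right_mono)
        have "(2::real) \<le> exp 1" using exp_ge_add_one_self[of 1] by simp
        moreover have "(5::real) \<le> real (k - 1)" using k by simp
        ultimately have "2 * 5 \<le> exp 1 * real (k - 1)" by (intro mult_mono) auto
        then show "10 \<le> exp 1 * real (k - 1)" by linarith
      qed simp
      finally show "real (R_graph K4_star k) \<le> exp 1 * (1 + 0) * real (k - 1) * fact k"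
        by (simp add: of_nat_fact)
    qed
  qed
qed

end
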